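(* For any odd prime $p$ and any positive integer $r$, $$p^rH_{p^r-1}(1)\equiv pH_{p-1}(1),\qquad p^{2r}H_{p^r-1}(1,1)\equiv p^2H_{p-1}(1,1),\qquad p^{3r}H_{p^r-1}(1,1,1)\equiv p^3H_{p-1}(1,1,1)\pmod{p^4}.$$
   Context: For positive integers $s_1,\dots,s_m$ and an integer $n\ge0$, $H_n(s_1,\dots,s_m)=\sum_{1\le k_1<\cdots<k_m\le n}\frac{1}{k_1^{s_1}\cdots k_m^{s_m}}$. A congruence $a\equiv b\pmod{p^m}$ between rational numbers means that $(a-b)/p^m$ is a rational number whose denominator is not divisible by $p$. *)

theory Defs
  imports Complex_Main "HOL-Computational_Algebra.Primes"
begin

definition mhs :: "nat \<Rightarrow> nat list \<Rightarrow> rat" where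
  "mhs n s = (\<Sum>ks \<in> {ks. length ks = length s \<and> sorted_wrt (<) ks \<and> set ks \<subseteq> {1..n}}.
                 (\<Prod>i<length s. 1 / (of_nat (ks ! i) ^ (s ! i))))"

definition rat_cong :: "rat \<Rightarrow> rat \<Rightarrow> nat \<Rightarrow> nat \<Rightarrow> bool" where
  "rat_cong a b p m = (\<not> (int p) dvd snd (quotient_of ((a - b) / of_nat (p ^ m))))"

end

theory Submission
  imports Defs "HOL-Computational_Algebra.Polynomial"
begin


lemma prod_monom1:
  fixes y :: "'a \<Rightarrow> 'b::comm_semiring_1"
  shows "finite T \<Longrightarrow> (\<Prod>k\<in>T. monom (y k) 1) = monom (\<Prod>k\<in>T. y k) (card T)"
  by (induction T rule: finite_induct) (auto simp: mult_monom)

lemma coeff_prod_lin: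
  fixes y :: "'a \<Rightarrow> 'b::comm_semiring_1"
  assumes "finite S"
  shows "coeff (\<Prod>k\<in>S. [:1, y k:]) d = (\<Sum>T\<in>{T. T \<subseteq> S \<and> card T = d}. \<Prod>k\<in>T. y k)"
proof -
  have e: "[:1, y k:] = monom (y k) 1 + 1" for k
    by (rule poly_eqI) (auto simp: coeff_monom coeff_pCons split: nat.split)
  have "(\<Prod>k\<in>S. [:1, y k:]) = (\<Sum>X\<in>Pow S. (\<Prod>k\<in>X. monom (y k) 1) * (\<Prod>k\<in>S-X. 1))"
    unfolding e by (rule prod_add[OF assms])
  also have "\<dots> = (\<Sum>X\<in>Pow S. monom (\<Prod>k\<in>X. y k) (card X))"
  proof (intro sum.cong refl)
    fix X assume "X \<in> Pow S"
    hence "finite X" using assms finite_subset by auto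
    thus "(\<Prod>k\<in>X. monom (y k) 1) * (\<Prod>k\<in>S-X. 1) = monom (\<Prod>k\<in>X. y k) (card X)"
      using prod_monom1[of X y] by simp
  qed
  finally have "coeff (\<Prod>k\<in>S. [:1, y k:]) d = (\<Sum>X\<in>Pow S. if card X = d then (\<Prod>k\<in>X. y k) else 0)"
    by (simp add: coeff_sum coeff_monom eq_commute)
  also have "\<dots> = (\<Sum>X\<in>{X\<in>Pow S. card X = d}. \<Prod>k\<in>X. y k)"
    using assms by (subst sum.inter_filter) auto
  finally show ?thesis by (simp add: Pow_def Collect_conj_eq)
qed


lemma mhs_rep:
  fixes c :: rat
  shows "c ^ d * mhs n (replicate d 1) = (\<Sum>T\<in>{T. T \<subseteq> {1..n} \<and> card T = d}. \<Prod>k\<in>T. c / of_nat k)"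
proof -
  define L where "L = {ks. length ks = d \<and> sorted_wrt (<) ks \<and> set ks \<subseteq> {1..n}}"
  define TT where "TT = {T. T \<subseteq> {1..n} \<and> card T = d}"
  have m: "mhs n (replicate d 1) = (\<Sum>ks\<in>L. \<Prod>i<d. 1 / of_nat (ks ! i))"
    unfolding mhs_def L_def by simp
  have bij: "bij_betw set L TT"
  proof (rule bij_betwI')
    fix x y assume "x \<in> L" "y \<in> L"
    thus "(set x = set y) = (x = y)" unfolding L_def using strict_sorted_equal by blast
  next
    fix x assume "x \<in> L" thus "set x \<in> TT" unfolding L_def TT_def
      by (auto simp: strict_sorted_iff distinct_card)
  next
    fix T assume "T \<in> TT"
    hence "finite T" unfolding TT_def using finite_subset by auto
    thus "\<exists>x\<in>L. T = set x" using \<open>T \<in> TT\<close> unfolding L_def TT_def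
      by (intro bexI[of _ "sorted_list_of_set T"]) auto
  qed
  have pr: "(\<Prod>i<d. 1 / of_nat (ks ! i)) = (\<Prod>k\<in>set ks. 1 / (of_nat k :: rat))" if "ks \<in> L" for ks
  proof -
    have "distinct ks" "length ks = d" using that unfolding L_def by (auto simp: strict_sorted_iff)
    thus ?thesis
      by (simp add: prod.distinct_set_conv_list prod.list_conv_set_nth atLeast0LessThan)
  qed
  have "mhs n (replicate d 1) = (\<Sum>T\<in>TT. \<Prod>k\<in>T. 1 / (of_nat k :: rat))"
    unfolding m using sum.reindex_bij_betw[OF bij, of "\<lambda>T. \<Prod>k\<in>T. 1 / (of_nat k :: rat)"] pr
    by (metis (no_types, lifting) sum.cong)
  hence "c ^ d * mhs n (replicate d 1) = (\<Sum>T\<in>TT. c ^ d * (\<Prod>k\<in>T. 1 / (of_nat k :: rat)))"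
    by (simp add: sum_distrib_left)
  also have "\<dots> = (\<Sum>T\<in>TT. \<Prod>k\<in>T. c / of_nat k)"
  proof (intro sum.cong refl)
    fix T assume "T \<in> TT" hence "card T = d" unfolding TT_def by auto
    thus "c ^ d * (\<Prod>k\<in>T. 1 / (of_nat k :: rat)) = (\<Prod>k\<in>T. c / of_nat k)"
      by (simp add: prod.distrib prod_constant[symmetric] divide_inverse)
  qed
  finally show ?thesis unfolding TT_def .
qed


definition pdv :: "nat \<Rightarrow> nat \<Rightarrow> rat \<Rightarrow> bool" where
  "pdv p m q \<longleftrightarrow> (\<exists>a b::int. \<not> int p dvd b \<and> q = of_int a * of_nat p ^ m / of_int b)"

lemma pdv_rat_cong: assumes "prime p" "pdv p m (a - b)" shows "rat_cong a b p m"
proof -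
  from assms(2) obtain x y :: int where xy: "\<not> int p dvd y" "a - b = of_int x * of_nat p ^ m / of_int y"
    unfolding pdv_def by blast
  have y0: "y \<noteq> 0" using xy(1) by auto
  have pm0: "(of_nat p ^ m :: rat) \<noteq> 0" using assms(1) by (auto dest: prime_gt_0_nat)
  have q: "(a - b) / of_nat (p ^ m) = of_int x / of_int y" using xy(2) pm0 by simp
  obtain c e where ce: "quotient_of ((a - b) / of_nat (p ^ m)) = (c, e)" by (cases "quotient_of ((a - b) / of_nat (p ^ m))")
  have "of_int c / of_int e = (of_int x / of_int y :: rat)" using quotient_of_div[OF ce] q by simp
  moreover have e0: "e > 0" using quotient_of_denom_pos[OF ce] .
  ultimately have "of_int (c * y) = (of_int (x * e) :: rat)" using y0
    by (simp add: field_simps)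
  hence "c * y = x * e" by (simp only: of_int_eq_iff)
  hence "e dvd c * y" by (metis dvd_triv_right)
  moreover have "coprime e c" using quotient_of_coprime[OF ce] by (simp add: coprime_commute)
  ultimately have "e dvd y" using coprime_dvd_mult_right_iff by blast
  hence "\<not> int p dvd e" using xy(1) dvd_trans by blast
  thus ?thesis unfolding rat_cong_def ce by simp
qed

lemma pdv_add: assumes "prime p" "pdv p m q1" "pdv p m q2" shows "pdv p m (q1 + q2)"
proof -
  from assms(2) obtain a1 b1 :: int where 1: "\<not> int p dvd b1" "q1 = of_int a1 * of_nat p ^ m / of_int b1"
    unfolding pdv_def by blast
  from assms(3) obtain a2 b2 :: int where 2: "\<not> int p dvd b2" "q2 = of_int a2 * of_nat p ^ m / of_int b2"
    unfolding pdv_def by blast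
  have pr: "prime (int p)" using assms(1) by simp
  have "\<not> int p dvd b1 * b2" using 1 2 pr by (simp add: prime_dvd_mult_iff)
  moreover have "q1 + q2 = of_int (a1 * b2 + a2 * b1) * of_nat p ^ m / of_int (b1 * b2)"
    using 1 2 by (cases "b1 = 0"; cases "b2 = 0") (auto simp: field_simps)
  ultimately show ?thesis unfolding pdv_def by blast
qed

lemma pdv_mult: assumes "prime p" "pdv p m q1" "pdv p n q2" shows "pdv p (m + n) (q1 * q2)"
proof -
  from assms(2) obtain a1 b1 :: int where 1: "\<not> int p dvd b1" "q1 = of_int a1 * of_nat p ^ m / of_int b1"
    unfolding pdv_def by blast
  from assms(3) obtain a2 b2 :: int where 2: "\<not> int p dvd b2" "q2 = of_int a2 * of_nat p ^ n / of_int b2"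
    unfolding pdv_def by blast
  have pr: "prime (int p)" using assms(1) by simp
  have "\<not> int p dvd b1 * b2" using 1 2 pr by (simp add: prime_dvd_mult_iff)
  moreover have "q1 * q2 = of_int (a1 * a2) * of_nat p ^ (m + n) / of_int (b1 * b2)"
    using 1 2 by (auto simp: field_simps power_add)
  ultimately show ?thesis unfolding pdv_def by blast
qed

lemma pdv_mono: assumes "pdv p m q" "n \<le> m" shows "pdv p n q"
proof -
  from assms(1) obtain a b :: int where 1: "\<not> int p dvd b" "q = of_int a * of_nat p ^ m / of_int b"
    unfolding pdv_def by blast
  have "q = of_int (a * int p ^ (m - n)) * of_nat p ^ n / of_int b"
    using 1 assms(2) by (simp add: power_add[symmetric])
  thus ?thesis using 1 unfolding pdv_def by blast
qed

lemma pdv_int: "prime p \<Longrightarrow> pdv p 0 (of_int a)"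
  unfolding pdv_def by (rule exI[of _ a], rule exI[of _ 1]) (auto simp: prime_gt_1_nat)

lemma pdv_zero: "prime p \<Longrightarrow> pdv p m 0"
  unfolding pdv_def by (rule exI[of _ 0], rule exI[of _ 1]) (auto simp: prime_gt_1_nat)

lemma pdv_neg: "pdv p m q \<Longrightarrow> pdv p m (- q)"
proof -
  assume "pdv p m q"
  then obtain a b :: int where 1: "\<not> int p dvd b" "q = of_int a * of_nat p ^ m / of_int b"
    unfolding pdv_def by blast
  hence "- q = of_int (- a) * of_nat p ^ m / of_int b" by simp
  thus ?thesis using 1 unfolding pdv_def by blast
qed

lemma pdv_diff: "prime p \<Longrightarrow> pdv p m q1 \<Longrightarrow> pdv p m q2 \<Longrightarrow> pdv p m (q1 - q2)"
  using pdv_add[of p m q1 "- q2"] pdv_neg by simp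

lemma pdv_sum: assumes "prime p" "\<And>i. i \<in> S \<Longrightarrow> pdv p m (f i)" shows "pdv p m (sum f S)"
  using assms(2)
proof (induction S rule: infinite_finite_induct)
  case (infinite A) thus ?case using pdv_zero[OF assms(1)] by simp
next
  case empty thus ?case using pdv_zero[OF assms(1)] by simp
next
  case (insert x F) thus ?case using pdv_add[OF assms(1)] by simp
qed

lemma pdv_prod: assumes "prime p" "\<And>i. i \<in> S \<Longrightarrow> pdv p m (f i)" shows "pdv p (m * card S) (prod f S)"
  using assms(2)
proof (induction S rule: infinite_finite_induct)
  case (infinite A) thus ?case using pdv_int[OF assms(1), of 1] by simp
next
  case empty thus ?case using pdv_int[OF assms(1), of 1] by simp
next
  case (insert x F)
  hence "pdv p (m + m * card F) (f x * prod f F)" using pdv_mult[OF assms(1)] by simp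
  thus ?case using insert by simp
qed

lemma pdv_half: assumes "prime p" "odd p" "pdv p m (2 * q)" shows "pdv p m q"
proof -
  from assms(3) obtain a b :: int where 1: "\<not> int p dvd b" "2 * q = of_int a * of_nat p ^ m / of_int b"
    unfolding pdv_def by blast
  have pr: "prime (int p)" using assms(1) by simp
  have "p \<noteq> 2" using assms(2) by auto
  hence "p > 2" using prime_ge_2_nat[OF assms(1)] by linarith
  hence "\<not> int p dvd 2" using zdvd_imp_le[of "int p" 2] by linarith
  hence "\<not> int p dvd (2 * b)" using 1 pr by (simp add: prime_dvd_mult_iff)
  moreover have "q = of_int a * of_nat p ^ m / of_int (2 * b)" using 1 by (cases "b = 0") (auto simp: field_simps)
  ultimately show ?thesis unfolding pdv_def by blast
qed

lemma pdv_frac: assumes "\<not> int p dvd b" shows "pdv p m (of_nat p ^ m / of_int b)"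
  unfolding pdv_def using assms by (intro exI[of _ 1] exI[of _ b]) simp



lemma pdecomp: fixes p k :: nat assumes "prime p" shows "k > 0 \<Longrightarrow> \<exists>v m. k = p ^ v * m \<and> \<not> p dvd m"
proof (induction k rule: less_induct)
  case (less k)
  show ?case
  proof (cases "p dvd k")
    case False thus ?thesis by (intro exI[of _ 0] exI[of _ k]) simp
  next
    case True
    then obtain k' where k': "k = p * k'" by blast
    have "p > 1" using assms prime_gt_1_nat by blast
    hence "k' < k" "k' > 0" using k' less.prems by auto
    then obtain v m where "k' = p ^ v * m" "\<not> p dvd m" using less.IH by blast
    thus ?thesis using k' by (intro exI[of _ "Suc v"] exI[of _ m]) simp
  qed
qed

lemma coeff_pdv:
  assumes "prime p" "finite X" "\<And>k. k \<in> X \<Longrightarrow> pdv p m (y k)"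
  shows "pdv p (m * d) (coeff (\<Prod>k\<in>X. [:1, y k:]) d)"
  unfolding coeff_prod_lin[OF assms(2)]
proof (rule pdv_sum[OF assms(1)])
  fix T assume "T \<in> {T. T \<subseteq> X \<and> card T = d}"
  hence "T \<subseteq> X" "card T = d" by auto
  thus "pdv p (m * d) (prod y T)" using pdv_prod[OF assms(1), of T m y] assms(3) by auto
qed

lemma coeff1: "finite X \<Longrightarrow> coeff (\<Prod>k\<in>X. [:1, y k:]) 1 = sum y X"
proof -
  assume f: "finite X"
  have "{T. T \<subseteq> X \<and> card T = 1} = (\<lambda>k. {k}) ` X" by (auto simp: card_1_singleton_iff)
  thus ?thesis unfolding coeff_prod_lin[OF f] by (simp add: sum.reindex)
qed



lemma pair_sum:
  fixes p r :: nat
  assumes p: "prime p" "odd p"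
  defines "N \<equiv> p ^ r"
  defines "B \<equiv> {k\<in>{1..N-1}. \<not> p ^ (r - 1) dvd k}"
  shows "pdv p 4 (\<Sum>k\<in>B. of_nat p ^ r / of_nat k)"
proof -
  define x where "x k = (of_nat p ^ r / of_nat k :: rat)" for k
  have p1: "p > 1" using p prime_gt_1_nat by blast
  have memB: "N - k \<in> B" if "k \<in> B" for k
  proof -
    have k: "1 \<le> k" "k \<le> N - 1" "\<not> p ^ (r - 1) dvd k" using that unfolding B_def by auto
    have "p ^ (r - 1) dvd N" if "r > 0" unfolding N_def using that by (simp add: le_imp_power_dvd)
    moreover have "r > 0" using k(3) by (cases r) auto
    ultimately have "\<not> p ^ (r - 1) dvd N - k" using k
      using dvd_diff_nat[of "p ^ (r - 1)" N "N - k"] by (metis diff_diff_cancel le_trans le_diff_conv2 diff_le_self)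
    thus ?thesis using k unfolding B_def by auto
  qed
  have invB: "N - (N - k) = k" if "k \<in> B" for k using that unfolding B_def by auto
  have "sum x B = (\<Sum>k\<in>B. x (N - k))"
    by (rule sum.reindex_bij_witness[of _ "\<lambda>k. N - k" "\<lambda>k. N - k"]) (auto simp: memB invB)
  hence "2 * sum x B = (\<Sum>k\<in>B. x k + x (N - k))" by (simp add: sum.distrib)
  moreover have "pdv p 4 (\<Sum>k\<in>B. x k + x (N - k))"
  proof (rule pdv_sum[OF p(1)])
    fix k assume kB: "k \<in> B"
    have k: "1 \<le> k" "k \<le> N - 1" "\<not> p ^ (r - 1) dvd k" using kB unfolding B_def by auto
    obtain v m where vm: "k = p ^ v * m" "\<not> p dvd m" using pdecomp[OF p(1), of k] k by auto
    have "v + 2 \<le> r"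
    proof (rule ccontr)
      assume "\<not> v + 2 \<le> r"
      hence "p ^ (r - 1) dvd p ^ v" by (intro le_imp_power_dvd) auto
      thus False using k(3) vm(1) by auto
    qed
    define t where "t = r - v"
    have t2: "t \<ge> 2" and Nt: "N = p ^ v * p ^ t" unfolding t_def N_def using \<open>v + 2 \<le> r\<close>
      by (auto simp flip: power_add)
    have m0: "m > 0" using vm k by (cases m) auto
    have "k < N" using k unfolding N_def using p1 by (simp add: less_eq_Suc_le)
    hence mlt: "m < p ^ t" using Nt vm(1) p1 by simp
    have Nk: "N - k = p ^ v * (p ^ t - m)" using Nt vm(1) by (simp add: diff_mult_distrib2)
    have pv0: "(of_nat p ^ v :: rat) \<noteq> 0" using p1 by simp
    have "x k + x (N - k) = of_nat p ^ t / of_nat m + of_nat p ^ t / of_nat (p ^ t - m)"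
    proof -
      have r: "(of_nat p ^ r :: rat) = of_nat p ^ v * of_nat p ^ t"
        using Nt unfolding N_def by (metis of_nat_mult of_nat_power)
      have 1: "x k = of_nat p ^ t / of_nat m" unfolding x_def r vm(1) using pv0 p1 by simp
      have 2: "x (N - k) = of_nat p ^ t / of_nat (p ^ t - m)" unfolding x_def r Nk of_nat_mult of_nat_power
        using mult_divide_mult_cancel_left[OF pv0] by blast
      show ?thesis using 1 2 by simp
    qed
    also have "\<dots> = of_nat p ^ (2 * t) / of_int (int m * (int (p ^ t) - int m))"
    proof -
      define a :: rat where "a = of_nat p ^ t"
      define M :: rat where "M = of_nat m"
      have d: "of_nat (p ^ t - m) = a - M" unfolding a_def M_def using mlt by (simp add: of_nat_diff)
      have i: "of_int (int m * (int (p ^ t) - int m)) = M * (a - M)" unfolding a_def M_def by simp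
      have M0: "M \<noteq> 0" unfolding M_def using m0 by simp
      have aM: "a - M \<noteq> 0" using d mlt by (metis of_nat_eq_0_iff zero_less_diff less_not_refl2)
      have "a / M + a / (a - M) = a ^ 2 / (M * (a - M))" using M0 aM by (simp add: field_simps power2_eq_square)
      moreover have "(of_nat p ^ (2 * t) :: rat) = a ^ 2" unfolding a_def by (simp add: power_mult mult.commute)
      ultimately show ?thesis unfolding d i by (simp add: a_def M_def)
    qed
    finally have eq: "x k + x (N - k) = of_nat p ^ (2 * t) / of_int (int m * (int (p ^ t) - int m))" .
    have pr: "prime (int p)" using p(1) by simp
    have "\<not> int p dvd int (p ^ t) - int m"
    proof
      assume "int p dvd int (p ^ t) - int m"
      moreover have "int p dvd int (p ^ t)" using t2 by (simp add: dvd_power)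
      ultimately have "int p dvd int m" using dvd_diff[of "int p" "int (p ^ t)" "int (p ^ t) - int m"] by simp
      thus False using vm(2) by simp
    qed
    hence "\<not> int p dvd int m * (int (p ^ t) - int m)" using vm(2) pr by (simp add: prime_dvd_mult_iff)
    hence "pdv p (2 * t) (x k + x (N - k))" unfolding eq by (rule pdv_frac)
    thus "pdv p 4 (x k + x (N - k))" by (rule pdv_mono) (use t2 in auto)
  qed
  ultimately have "pdv p 4 (2 * sum x B)" by simp
  thus ?thesis using pdv_half[OF p] unfolding x_def by blast
qed



lemma main:
  fixes p r d :: nat
  assumes p: "prime p" "odd p" and r: "r > 0"
  shows "rat_cong ((of_nat p ^ r) ^ d * mhs (p ^ r - 1) (replicate d 1))
                  (of_nat p ^ d * mhs (p - 1) (replicate d 1)) p 4"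
proof -
  define N where "N = p ^ r"
  define x where "x k = (of_nat p ^ r / of_nat k :: rat)" for k
  define y where "y m = (of_nat p / of_nat m :: rat)" for m
  define S where "S = {1..N-1}"
  define A where "A = {k\<in>S. p ^ (r - 1) dvd k}"
  define B where "B = {k\<in>S. \<not> p ^ (r - 1) dvd k}"
  define E where "E X i = coeff (\<Prod>k\<in>X. [:1, x k:]) i" for X i
  define F where "F i = coeff (\<Prod>m\<in>{1..p-1}. [:1, y m:]) i" for i
  have p1: "p > 1" using p prime_gt_1_nat by blast
  have fin: "finite A" "finite B" unfolding A_def B_def S_def by auto
  have lhs: "(of_nat p ^ r) ^ d * mhs (p ^ r - 1) (replicate d 1) = E S d"
    unfolding E_def mhs_rep coeff_prod_lin[OF finite_atLeastAtMost] S_def N_def x_def ..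
  have rhs: "of_nat p ^ d * mhs (p - 1) (replicate d 1) = F d"
    unfolding F_def mhs_rep coeff_prod_lin[OF finite_atLeastAtMost] y_def ..
  have SAB: "S = A \<union> B" "A \<inter> B = {}" unfolding A_def B_def by auto
  have ES: "E S i = (\<Sum>j\<le>i. E A j * E B (i - j))" for i
    unfolding E_def SAB(1) prod.union_disjoint[OF fin SAB(2)] coeff_mult ..
  have Npr: "N = p ^ (r - 1) * p" unfolding N_def using r by (simp add: power_eq_if)
  have Aim: "A = (\<lambda>m. p ^ (r - 1) * m) ` {1..p-1}"
  proof (rule set_eqI, rule iffI)
    fix k assume "k \<in> A"
    hence kk: "1 \<le> k" "k \<le> N - 1" "p ^ (r - 1) dvd k" unfolding A_def S_def by auto
    then obtain m0 where "k = p ^ (r - 1) * m0" by (auto elim: dvdE)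
    hence m: "k = p ^ (r - 1) * m0" "1 \<le> k" "k \<le> N - 1" using kk by auto
    have "N > 0" unfolding N_def using p1 by simp
    hence "k < N" using m by linarith
    hence "k < p ^ (r - 1) * p" using Npr by simp
    hence "m0 < p" using m(1) by simp
    moreover have "m0 \<ge> 1" using m by (cases m0) auto
    ultimately show "k \<in> (\<lambda>m. p ^ (r - 1) * m) ` {1..p-1}" using m(1) by auto
  next
    fix k assume "k \<in> (\<lambda>m. p ^ (r - 1) * m) ` {1..p-1}"
    then obtain m where m: "k = p ^ (r - 1) * m" "1 \<le> m" "m \<le> p - 1" by (auto simp only: image_iff atLeastAtMost_iff)
    have "m < p" using m p1 by linarith
    hence "k < N" unfolding Npr m(1) using p1 by simp
    moreover have "k \<ge> 1" using m p1 by simp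
    ultimately show "k \<in> A" unfolding A_def S_def using m(1) by auto
  qed
  have inj: "inj_on (\<lambda>m. p ^ (r - 1) * m) {1..p-1}" using p1 by (auto intro: inj_onI)
  have xy: "x (p ^ (r - 1) * m) = y m" for m
  proof -
    have "(of_nat p ^ r :: rat) = of_nat p ^ (r - 1) * of_nat p"
      using Npr unfolding N_def by (metis of_nat_mult of_nat_power)
    moreover have "(of_nat p ^ (r - 1) :: rat) \<noteq> 0" using p1 by simp
    ultimately show ?thesis unfolding x_def y_def by simp
  qed
  have EA: "E A i = F i" for i
    unfolding E_def F_def Aim prod.reindex[OF inj] o_def xy ..
  have Fint: "pdv p 0 (F i)" for i
  proof -
    have "pdv p (1 * i) (F i)" unfolding F_def
    proof (rule coeff_pdv[OF p(1) finite_atLeastAtMost])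
      fix m assume "m \<in> {1..p-1}"
      hence "0 < m" "m < p" using p1 by auto
      hence "\<not> int p dvd int m" by (auto dest: zdvd_imp_le)
      thus "pdv p 1 (y m)" unfolding y_def using pdv_frac[of p "int m" 1] by simp
    qed
    thus ?thesis by (rule pdv_mono) simp
  qed
  have xB: "pdv p 2 (x k)" if "k \<in> B" for k
  proof -
    have k: "1 \<le> k" "\<not> p ^ (r - 1) dvd k" using that unfolding B_def S_def by auto
    obtain v m where vm: "k = p ^ v * m" "\<not> p dvd m" using pdecomp[OF p(1), of k] k by auto
    have "v + 2 \<le> r"
    proof (rule ccontr)
      assume "\<not> v + 2 \<le> r"
      hence "p ^ (r - 1) dvd p ^ v" by (intro le_imp_power_dvd) auto
      thus False using k(2) vm(1) by auto
    qed
    have r: "(of_nat p ^ r :: rat) = of_nat p ^ v * of_nat p ^ (r - v)"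
      using \<open>v + 2 \<le> r\<close> by (simp flip: power_add)
    have "x k = of_nat p ^ (r - v) / of_int (int m)"
      unfolding x_def r vm(1) using p1 by simp
    moreover have "\<not> int p dvd int m" using vm(2) by simp
    ultimately have "pdv p (r - v) (x k)" using pdv_frac[of p "int m" "r - v"] by simp
    thus ?thesis by (rule pdv_mono) (use \<open>v + 2 \<le> r\<close> in auto)
  qed
  have EB1: "pdv p 4 (E B 1)"
    unfolding E_def coeff1[OF fin(2)] using pair_sum[OF p, of r]
    unfolding x_def B_def S_def N_def by simp
  have EB2: "pdv p 4 (E B j)" if "j \<ge> 2" for j
  proof -
    have "pdv p (2 * j) (E B j)" unfolding E_def by (rule coeff_pdv[OF p(1) fin(2) xB])
    thus ?thesis by (rule pdv_mono) (use that in auto)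
  qed
  have EB: "pdv p 4 (E B j)" if "j \<ge> 1" for j
    using EB1 EB2 that by (cases "j = 1") auto
  have "{T. T \<subseteq> B \<and> card T = 0} = {{}}" using fin(2) by (auto dest: finite_subset)
  hence EB0: "E B 0 = 1" unfolding E_def coeff_prod_lin[OF fin(2)] by simp
  have "pdv p 4 (E S d - F d)"
  proof (cases d)
    case 0
    have "E S 0 - F 0 = 0" using ES[of 0] EB0 EA by simp
    thus ?thesis using 0 pdv_zero[OF p(1)] by simp
  next
    case (Suc d')
    have "E S d - F d = (\<Sum>j\<le>d'. E A j * E B (d - j))"
      unfolding ES Suc sum.atMost_Suc using EB0 EA by simp
    also have "pdv p 4 \<dots>"
    proof (rule pdv_sum[OF p(1)])
      fix j assume "j \<in> {..d'}"
      hence "d - j \<ge> 1" using Suc by auto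
      thus "pdv p 4 (E A j * E B (d - j))" using pdv_mult[OF p(1) Fint EB] EA by simp
    qed
    finally show ?thesis .
  qed
  thus ?thesis unfolding lhs rhs by (rule pdv_rat_cong[OF p(1)])
qed


theorem lemma3p1:
  fixes p r :: nat
  assumes "prime p" and "odd p" and "r > 0"
  shows "rat_cong (of_nat p ^ r * mhs (p ^ r - 1) [1]) (of_nat p * mhs (p - 1) [1]) p 4
       \<and> rat_cong (of_nat p ^ (2 * r) * mhs (p ^ r - 1) [1, 1]) (of_nat p ^ 2 * mhs (p - 1) [1, 1]) p 4
       \<and> rat_cong (of_nat p ^ (3 * r) * mhs (p ^ r - 1) [1, 1, 1]) (of_nat p ^ 3 * mhs (p - 1) [1, 1, 1]) p 4"
proof -
  have "rat_cong ((of_nat p ^ r) ^ d * mhs (p ^ r - 1) (replicate d 1))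
                  (of_nat p ^ d * mhs (p - 1) (replicate d 1)) p 4" for d
    using main[OF assms] .
  from this[of 1] this[of 2] this[of 3] show ?thesis
    by (simp add: numeral_2_eq_2 numeral_3_eq_3 power_add)
qed

end
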